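(* Let $n,d,k\in\mathbb{N}$ and let $G\subseteq\mathbb{N}$ be infinite (so $G\approx\omega$). Then there exists $H\subseteq\omega^d\cdot k$ with $H\approx\omega^d\cdot k$ such that every $e\in\binom{H}{n}$ satisfies some coloring rule on $\binom{\omega^d\cdot k}{n}$, and every coefficient of every element of $e$ lies in $G$.
   Context: Ordinals are identified with sets of smaller ordinals; $\approx$ is order-equivalence; $\binom{S}{n}$ is the set of $n$-element subsets. Every $\beta<\omega^d\cdot k$ is uniquely written $\beta=\omega^d b+\omega^{d-1}a_{d-1}+\cdots+\omega a_1+a_0$ with $0\le b<k$, $a_j\in\mathbb{N}$; the numbers $a_0,\dots,a_{d-1}$ are called the coefficients of $\beta$. A coloring rule (CR) on $\binom{\omega^d\cdot k}{n}$ is a pair $(\mathcal{Y},\preceq)$ with $\mathcal{Y}:\{1,\dots,n\}\to\{0,\dots,k-1\}$ and $\preceq$ a total preorder on $I=\{(i,j):1\le i\le n,0\le j<d\}$ (with induced equivalence $\equiv$ and strict part $\prec$) such that: (1) if $d\ge1$, $(i,0)\prec(i',0)$ for $i<i'$; if $d=0$, $\mathcal{Y}(i)<\mathcal{Y}(i')$ for $i<i'$; (2) $(i,j)\equiv(i',j)$ for some $j$ implies $\mathcal{Y}(i)=\mathcal{Y}(i')$; (3) $(i,j)\prec(i,j')$ for $j>j'$; (4) $(i,j)\equiv(i',j')$ implies $j=j'$; (5) for $j>0$, $(i,j)\not\equiv(i',j)$ implies $(i,j-1)\not\equiv(i',j-1)$. An edge $e\in\binom{\omega^d\cdot k}{n}$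 satisfies the CR $(\mathcal{Y},\preceq)$ if its elements can be enumerated as $p_i=\omega^d b_i+\sum_{j<d}\omega^j a_{i,j}$ ($1\le i\le n$) with $b_i=\mathcal{Y}(i)$ for all $i$ and $(i,j)\preceq(i',j')\iff a_{i,j}\le a_{i',j'}$ for all $(i,j),(i',j')\in I$. *)

theory Defs
  imports Main
begin

text \<open>An ordinal beta < omega^d * k is represented by its Cantor normal form data
  (b, a) with b < k and coefficient function a, where a j is the coefficient of
  omega^j (j < d) and a j = 0 for j >= d.\<close>

type_synonym ordrep = "nat \<times> (nat \<Rightarrow> nat)"

definition OrdSet :: "nat \<Rightarrow> nat \<Rightarrow> ordrep set" where
  "OrdSet d k = {(b, a). b < k \<and> (\<forall>j\<ge>d. a j = 0)}"

definition ord_less :: "nat \<Rightarrow> ordrep \<Rightarrow> ordrep \<Rightarrow> bool" where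
  "ord_less d x y \<longleftrightarrow>
     fst x < fst y \<or>
     (fst x = fst y \<and> (\<exists>j<d. snd x j < snd y j \<and> (\<forall>i. j < i \<and> i < d \<longrightarrow> snd x i = snd y i)))"

definition order_equiv_full :: "nat \<Rightarrow> nat \<Rightarrow> ordrep set \<Rightarrow> bool" where
  "order_equiv_full d k H \<longleftrightarrow>
     (\<exists>f. bij_betw f (OrdSet d k) H \<and>
          (\<forall>x\<in>OrdSet d k. \<forall>y\<in>OrdSet d k. ord_less d x y \<longrightarrow> ord_less d (f x) (f y)))"

definition IndexSet :: "nat \<Rightarrow> nat \<Rightarrow> (nat \<times> nat) set" where
  "IndexSet n d = {1..n} \<times> {0..<d}"

definition is_CR :: "nat \<Rightarrow> nat \<Rightarrow> nat \<Rightarrow> (nat \<Rightarrow> nat) \<Rightarrow> ((nat \<times> nat) \<times> (nat \<times> nat)) set \<Rightarrow> bool" where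
  "is_CR n d k Y R \<longleftrightarrow>
    (let I = IndexSet n d;
         le = (\<lambda>p q. (p, q) \<in> R);
         eqv = (\<lambda>p q. le p q \<and> le q p);
         lt = (\<lambda>p q. le p q \<and> \<not> le q p)
     in
      (\<forall>i\<in>{1..n}. Y i < k) \<and>
      R \<subseteq> I \<times> I \<and> refl_on I R \<and> trans R \<and> total_on I R \<and>
      (d \<ge> 1 \<longrightarrow> (\<forall>i\<in>{1..n}. \<forall>i'\<in>{1..n}. i < i' \<longrightarrow> lt (i, 0) (i', 0))) \<and>
      (d = 0 \<longrightarrow> (\<forall>i\<in>{1..n}. \<forall>i'\<in>{1..n}. i < i' \<longrightarrow> Y i < Y i')) \<and>
      (\<forall>i\<in>{1..n}. \<forall>i'\<in>{1..n}. \<forall>j<d. eqv (i, j) (i', j) \<longrightarrow> Y i = Y i') \<and>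
      (\<forall>i\<in>{1..n}. \<forall>j<d. \<forall>j'<d. j > j' \<longrightarrow> lt (i, j) (i, j')) \<and>
      (\<forall>p\<in>I. \<forall>q\<in>I. eqv p q \<longrightarrow> snd p = snd q) \<and>
      (\<forall>i\<in>{1..n}. \<forall>i'\<in>{1..n}. \<forall>j<d. j > 0 \<longrightarrow>
          \<not> eqv (i, j) (i', j) \<longrightarrow> \<not> eqv (i, j - 1) (i', j - 1)))"

definition satisfies_CR :: "nat \<Rightarrow> nat \<Rightarrow> ordrep set \<Rightarrow> (nat \<Rightarrow> nat) \<Rightarrow> ((nat \<times> nat) \<times> (nat \<times> nat)) set \<Rightarrow> bool" where
  "satisfies_CR n d e Y R \<longleftrightarrow>
    (\<exists>p :: nat \<Rightarrow> ordrep. e = p ` {1..n} \<and>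
       (\<forall>i\<in>{1..n}. fst (p i) = Y i) \<and>
       (\<forall>x\<in>IndexSet n d. \<forall>y\<in>IndexSet n d.
          ((x, y) \<in> R \<longleftrightarrow> snd (p (fst x)) (snd x) \<le> snd (p (fst y)) (snd y))))"

end

theory Submission
  imports Defs "HOL-Library.Nat_Bijection" "HOL-Library.Infinite_Set"
begin

definition PP :: "nat \<Rightarrow> nat \<Rightarrow> nat" where
  "PP m a = Suc (prod_encode (m, a))"

lemma PP_inj: "PP m a = PP m' a' \<Longrightarrow> m = m' \<and> a = a'"
  by (simp add: PP_def)

lemma PP_gt: "m < PP m a"
  using le_prod_encode_1[of m a] by (simp add: PP_def)

lemma triangle_mono: "m \<le> n \<Longrightarrow> triangle m \<le> triangle n"
  by (induct n) (auto simp: le_Suc_eq)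

lemma triangle_strict: "m < n \<Longrightarrow> triangle m < triangle n"
  by (induct n) (auto simp: less_Suc_eq)

lemma PP_mono: "a < a' \<Longrightarrow> PP m a < PP m a'"
  unfolding PP_def prod_encode_def using triangle_strict[of "m + a" "m + a'"] by simp

function Tr :: "nat \<Rightarrow> ordrep \<Rightarrow> nat \<Rightarrow> nat" where
  "Tr d x j = (if d \<le> j then fst x else PP (Tr d x (Suc j)) (snd x j))"
  by auto
termination by (relation "measure (\<lambda>(d,x,j). d - j)") auto

declare Tr.simps[simp del]

lemma Tr_step:
  assumes "Tr d x j = Tr d y j"
  shows "Tr d x (Suc j) = Tr d y (Suc j) \<and> (j < d \<longrightarrow> snd x j = snd y j)"
proof (cases "d \<le> j")
  case True
  then show ?thesis using assms by (simp add: Tr.simps[of d _ j] Tr.simps[of d _ "Suc j"])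
next
  case False
  then have "PP (Tr d x (Suc j)) (snd x j) = PP (Tr d y (Suc j)) (snd y j)"
    using assms by (simp add: Tr.simps[of d _ j])
  then show ?thesis by (simp add: PP_def)
qed

lemma Tr_up:
  assumes "Tr d x j = Tr d y j" "j \<le> i"
  shows "Tr d x i = Tr d y i"
  using assms(2,1)
  by (induct i rule: dec_induct) (auto dest: Tr_step)

lemma Tr_eq_snd:
  assumes "Tr d x j = Tr d y j" "j \<le> i" "i < d"
  shows "snd x i = snd y i"
  using Tr_step[OF Tr_up[OF assms(1,2)]] assms(3) by simp

lemma Tr_eq_fst:
  assumes "Tr d x j = Tr d y j"
  shows "fst x = fst y"
proof -
  have "Tr d x (max d j) = Tr d y (max d j)" using Tr_up[OF assms] by simp
  then show ?thesis by (simp add: Tr.simps[of d _ "max d j"])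
qed

lemma Tr_dec1: "j < d \<Longrightarrow> Tr d x (Suc j) < Tr d x j"
  using PP_gt by (simp add: Tr.simps[of d x j])

lemma Tr_dec:
  assumes "j < i" "i \<le> d"
  shows "Tr d x i < Tr d x j"
proof -
  have "Suc j \<le> i" using assms by simp
  then show ?thesis using assms(2)
  proof (induct i rule: dec_induct)
    case base
    then show ?case using Tr_dec1 by simp
  next
    case (step i)
    then show ?case using Tr_dec1[of i d x] by simp
  qed
qed

lemma Tr_same:
  assumes "fst x = fst y" "\<forall>i. m \<le> i \<and> i < d \<longrightarrow> snd x i = snd y i"
  shows "m \<le> i \<Longrightarrow> Tr d x i = Tr d y i"
proof (induct "d - i" arbitrary: i)
  case 0
  then show ?case using assms by (simp add: Tr.simps[of d _ i])
next
  case (Suc t)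
  then have "Tr d x (Suc i) = Tr d y (Suc i)" by simp
  then show ?case using Suc assms by (simp add: Tr.simps[of d _ i])
qed

definition code :: "nat \<Rightarrow> nat set \<Rightarrow> ordrep \<Rightarrow> nat \<Rightarrow> nat" where
  "code d G x j = enumerate G (d * Tr d x j + j)"

definition fm :: "nat \<Rightarrow> nat set \<Rightarrow> ordrep \<Rightarrow> ordrep" where
  "fm d G x = (fst x, \<lambda>j. if j < d then code d G x j else 0)"

definition kappa :: "nat \<Rightarrow> ordrep \<Rightarrow> nat" where
  "kappa d z = (if d = 0 then fst z else snd z 0)"

lemma enum_inj: "infinite G \<Longrightarrow> enumerate G a = enumerate G b \<Longrightarrow> a = b"
  by (metis enumerate_mono_le_iff le_antisym order_refl)

lemma code_eq:
  assumes G: "infinite G" and "j < d" "j' < d" "code d G x j = code d G y j'"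
  shows "j = j' \<and> Tr d x j = Tr d y j"
proof -
  have e: "d * Tr d x j + j = d * Tr d y j' + j'"
    using enum_inj[OF G] assms by (simp add: code_def)
  then have "(d * Tr d x j + j) mod d = (d * Tr d y j' + j') mod d" by simp
  then have "j = j'" using assms by simp
  moreover then have "Tr d x j = Tr d y j" using e assms by simp
  ultimately show ?thesis by simp
qed

lemma code_in: "infinite G \<Longrightarrow> code d G x j \<in> G"
  by (simp add: code_def enumerate_in_set)

lemma code_lt:
  assumes G: "infinite G" and "j' < j" "j < d"
  shows "code d G x j < code d G x j'"
proof -
  have "Tr d x j < Tr d x j'" using Tr_dec assms by simp
  then have "d * (Tr d x j + 1) \<le> d * Tr d x j'" by (intro mult_le_mono2) simp
  then have "d * Tr d x j + j < d * Tr d x j' + j'" using assms by (simp add: algebra_simps)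
  then show ?thesis using G by (simp add: code_def)
qed

lemma code_mono:
  assumes G: "infinite G" and "Tr d x j < Tr d y j" "j < d"
  shows "code d G x j < code d G y j"
proof -
  have "d * Tr d x j + j < d * Tr d y j + j" using assms by simp
  then show ?thesis using G by (simp add: code_def)
qed

lemma fm_key_inj:
  assumes G: "infinite G" and x: "x \<in> OrdSet d k" and y: "y \<in> OrdSet d k"
    and eq: "kappa d (fm d G x) = kappa d (fm d G y)"
  shows "x = y"
proof (cases "d = 0")
  case True
  then show ?thesis using x y eq
    by (cases x, cases y) (auto simp: OrdSet_def kappa_def fm_def)
next
  case False
  then have "code d G x 0 = code d G y 0" using eq by (simp add: kappa_def fm_def)
  then have T: "Tr d x 0 = Tr d y 0" using code_eq[OF G] False by blast
  then have "fst x = fst y" by (rule Tr_eq_fst)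
  moreover have "snd x i = snd y i" for i
  proof (cases "i < d")
    case True then show ?thesis using Tr_eq_snd[OF T] by simp
  next
    case False then show ?thesis using x y by (auto simp: OrdSet_def)
  qed
  ultimately show ?thesis by (simp add: prod_eq_iff fun_eq_iff)
qed

lemma fm_inj:
  assumes G: "infinite G" and "x \<in> OrdSet d k" "y \<in> OrdSet d k" "fm d G x = fm d G y"
  shows "x = y"
  using fm_key_inj[OF assms(1-3)] assms(4) by simp

lemma fm_in: "x \<in> OrdSet d k \<Longrightarrow> fm d G x \<in> OrdSet d k"
  by (auto simp: OrdSet_def fm_def)

lemma fm_order:
  assumes G: "infinite G" and "ord_less d x y"
  shows "ord_less d (fm d G x) (fm d G y)"
proof (cases "fst x < fst y")
  case True then show ?thesis by (simp add: ord_less_def fm_def)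
next
  case False
  then obtain j where j: "fst x = fst y" "j < d" "snd x j < snd y j"
    "\<forall>i. j < i \<and> i < d \<longrightarrow> snd x i = snd y i"
    using assms by (auto simp: ord_less_def)
  have same: "Tr d x i = Tr d y i" if "Suc j \<le> i" for i
    using Tr_same[of x y "Suc j" d i] j that by auto
  have "Tr d x j < Tr d y j"
    using same[of "Suc j"] j PP_mono by (simp add: Tr.simps[of d _ j])
  then have "code d G x j < code d G y j" using code_mono[OF G] j by blast
  moreover have "\<forall>i. j < i \<and> i < d \<longrightarrow> code d G x i = code d G y i"
    using same by (simp add: code_def Suc_le_eq)
  ultimately show ?thesis using j by (auto simp: ord_less_def fm_def)
qed

lemma edge_CR:
  assumes G: "infinite G"
    and eH: "e \<subseteq> fm d G ` OrdSet d k" and fin: "finite e" and ce: "card e = n"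
  shows "\<exists>Y R. is_CR n d k Y R \<and> satisfies_CR n d e Y R"
proof -
  define H where "H = fm d G ` OrdSet d k"
  have kinj: "inj_on (kappa d) e"
  proof (rule inj_onI)
    fix z z' assume "z \<in> e" "z' \<in> e" "kappa d z = kappa d z'"
    then show "z = z'" using eH fm_key_inj[OF G] by blast
  qed
  define S where "S = kappa d ` e"
  have finS: "finite S" using fin by (simp add: S_def)
  have cS: "card S = n" using kinj ce by (simp add: S_def card_image)
  define p where "p i = inv_into e (kappa d) (enumerate S (i - 1))" for i
  have enS: "enumerate S (i - 1) \<in> S" if "i \<in> {1..n}" for i
  proof -
    have "i - 1 < card S" using that cS by auto
    then show ?thesis using finite_enumerate_in_set[OF finS] by blast
  qed
  have pe: "p i \<in> e" if "i \<in> {1..n}" for i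
    using enS[OF that] by (simp add: p_def S_def inv_into_into)
  have kp: "kappa d (p i) = enumerate S (i - 1)" if "i \<in> {1..n}" for i
    using enS[OF that] by (simp add: p_def S_def f_inv_into_f)
  have kmono: "kappa d (p i) < kappa d (p i')" if "i \<in> {1..n}" "i' \<in> {1..n}" "i < i'" for i i'
    using kp that finite_enumerate_mono[OF _ finS, of "i - 1" "i' - 1"] cS by auto
  have pimg: "e = p ` {1..n}"
  proof
    show "p ` {1..n} \<subseteq> e" using pe by blast
    show "e \<subseteq> p ` {1..n}"
    proof
      fix z assume z: "z \<in> e"
      then have "kappa d z \<in> S" by (simp add: S_def)
      then obtain m where m: "m < n" "enumerate S m = kappa d z"
        using finite_bij_enumerate[OF finS] cS by (metis bij_betw_iff_bijections lessThan_iff)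
      have "p (Suc m) = z" using m z kinj by (simp add: p_def)
      moreover have "Suc m \<in> {1..n}" using m by simp
      ultimately show "z \<in> p ` {1..n}" by blast
    qed
  qed
  define q where "q i = inv_into (OrdSet d k) (fm d G) (p i)" for i
  have qO: "q i \<in> OrdSet d k" and pq: "p i = fm d G (q i)" if "i \<in> {1..n}" for i
    using pe[OF that] eH by (auto simp: q_def inv_into_into f_inv_into_f)
  define V where "V u = snd (p (fst u)) (snd u)" for u
  have Vc: "V (i, j) = code d G (q i) j" if "i \<in> {1..n}" "j < d" for i j
    using pq[OF that(1)] that by (simp add: V_def fm_def)
  define Y where "Y i = fst (p i)" for i
  have Yq: "Y i = fst (q i)" if "i \<in> {1..n}" for i
    using pq[OF that] by (simp add: Y_def fm_def)
  define I where "I = IndexSet n d"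
  have Imem: "(u \<in> I) = (fst u \<in> {1..n} \<and> snd u < d)" for u
    by (cases u) (auto simp: I_def IndexSet_def)
  define R where "R = {(u, w). u \<in> I \<and> w \<in> I \<and> V u \<le> V w}"
  have sat: "satisfies_CR n d e Y R"
    unfolding satisfies_CR_def
    by (rule exI[of _ p]) (auto simp: pimg Y_def R_def V_def I_def)
  have c1: "Y i < k" if "i \<in> {1..n}" for i
    using qO[OF that] Yq[OF that] by (auto simp: OrdSet_def)
  have cR: "R \<subseteq> I \<times> I" "refl_on I R" "trans R" "total_on I R"
    by (auto simp: R_def refl_on_def trans_def total_on_def)
  have c_d1: "(i, 0) \<in> I \<and> (i', 0) \<in> I \<and> V (i, 0) < V (i', 0)"
    if "d \<ge> 1" "i \<in> {1..n}" "i' \<in> {1..n}" "i < i'" for i i'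
    using kmono[OF that(2-4)] that by (simp add: kappa_def V_def Imem)
  have c_d0: "Y i < Y i'" if "d = 0" "i \<in> {1..n}" "i' \<in> {1..n}" "i < i'" for i i'
    using kmono[OF that(2-4)] that by (simp add: kappa_def Y_def)
  have c2: "Y i = Y i'" if "i \<in> {1..n}" "i' \<in> {1..n}" "j < d" "V (i, j) = V (i', j)" for i i' j
  proof -
    have "Tr d (q i) j = Tr d (q i') j"
      using code_eq[OF G] that Vc by metis
    then show ?thesis using Tr_eq_fst Yq that by metis
  qed
  have c3: "V (i, j) < V (i, j')" if "i \<in> {1..n}" "j < d" "j' < d" "j > j'" for i j j'
    using Vc that code_lt[OF G] by simp
  have c4: "snd u = snd w" if "u \<in> I" "w \<in> I" "V u = V w" for u w
  proof -
    obtain i j i' j' where u: "u = (i, j)" and w: "w = (i', j')" by fastforce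
    show ?thesis using that code_eq[OF G] Vc unfolding u w Imem by (metis fst_conv snd_conv)
  qed
  have c5: "V (i, j) = V (i', j)"
    if "i \<in> {1..n}" "i' \<in> {1..n}" "j < d" "j > 0" "V (i, j - 1) = V (i', j - 1)" for i i' j
  proof -
    have "Tr d (q i) (j - 1) = Tr d (q i') (j - 1)"
      using code_eq[OF G] that Vc by (metis less_imp_diff_less)
    then have "Tr d (q i) j = Tr d (q i') j" using Tr_up by (metis diff_le_self)
    then show ?thesis using Vc that by (simp add: code_def)
  qed
  have "is_CR n d k Y R"
    unfolding is_CR_def Let_def I_def[symmetric]
    apply (intro conjI)
    subgoal using c1 by blast
    subgoal using cR by blast
    subgoal using cR by blast
    subgoal using cR by blast
    subgoal using cR by blast
    subgoal
    proof (intro impI ballI)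
      fix i i' assume "1 \<le> d" "i \<in> {1..n}" "i' \<in> {1..n}" "i < i'"
      then show "((i, 0), i', 0) \<in> R \<and> ((i', 0), i, 0) \<notin> R"
        using c_d1[of i i'] by (simp add: R_def)
    qed
    subgoal using c_d0 by blast
    subgoal
    proof (intro impI ballI allI)
      fix i i' j assume "i \<in> {1..n}" "i' \<in> {1..n}" "j < d"
        "((i, j), i', j) \<in> R \<and> ((i', j), i, j) \<in> R"
      then show "Y i = Y i'" using c2[of i i' j] by (simp add: R_def)
    qed
    subgoal
    proof (intro impI ballI allI)
      fix i j j' assume a: "i \<in> {1..n}" "j < d" "j' < d" "j' < j"
      then have "(i, j) \<in> I" "(i, j') \<in> I" by (simp_all add: Imem)
      then show "((i, j), i, j') \<in> R \<and> ((i, j'), i, j) \<notin> R"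
        using c3[OF a] by (simp add: R_def)
    qed
    subgoal
    proof (intro impI ballI allI)
      fix u w assume "u \<in> I" "w \<in> I" "(u, w) \<in> R \<and> (w, u) \<in> R"
      then show "snd u = snd w" using c4[of u w] by (simp add: R_def)
    qed
    subgoal
    proof (intro impI ballI allI)
      fix i i' j assume a: "i \<in> {1..n}" "i' \<in> {1..n}" "j < d" "0 < j"
        "\<not> (((i, j), i', j) \<in> R \<and> ((i', j), i, j) \<in> R)"
      have m: "(i, j) \<in> I" "(i', j) \<in> I" "(i, j - 1) \<in> I" "(i', j - 1) \<in> I"
        using a by (simp_all add: Imem)
      show "\<not> (((i, j - 1), i', j - 1) \<in> R \<and> ((i', j - 1), i, j - 1) \<in> R)"
      proof
        assume "((i, j - 1), i', j - 1) \<in> R \<and> ((i', j - 1), i, j - 1) \<in> R"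
        then have "V (i, j - 1) = V (i', j - 1)" by (simp add: R_def)
        then have "V (i, j) = V (i', j)" using c5 a by blast
        then show False using a(5) m by (simp add: R_def)
      qed
    qed
    done
  then show ?thesis using sat by blast
qed

theorem lemma9p2:
  fixes n d k :: nat and G :: "nat set"
  assumes "infinite G"
  shows "\<exists>H \<subseteq> OrdSet d k. order_equiv_full d k H \<and>
           (\<forall>e. e \<subseteq> H \<and> finite e \<and> card e = n \<longrightarrow>
              (\<exists>Y R. is_CR n d k Y R \<and> satisfies_CR n d e Y R) \<and>
              (\<forall>x\<in>e. \<forall>j<d. snd x j \<in> G))"
proof (intro exI[of _ "fm d G ` OrdSet d k"] conjI allI impI)
  show "fm d G ` OrdSet d k \<subseteq> OrdSet d k" using fm_in by blast
  show "order_equiv_full d k (fm d G ` OrdSet d k)"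
    unfolding order_equiv_full_def
  proof (intro exI[of _ "fm d G"] conjI ballI impI)
    show "bij_betw (fm d G) (OrdSet d k) (fm d G ` OrdSet d k)"
      unfolding bij_betw_def using fm_inj[OF assms] by (auto intro: inj_onI)
    show "ord_less d (fm d G x) (fm d G y)" if "ord_less d x y" for x y
      using fm_order[OF assms that] .
  qed
  fix e assume e: "e \<subseteq> fm d G ` OrdSet d k \<and> finite e \<and> card e = n"
  then show "\<exists>Y R. is_CR n d k Y R \<and> satisfies_CR n d e Y R"
    using edge_CR[OF assms] by blast
  show "\<forall>x\<in>e. \<forall>j<d. snd x j \<in> G"
    using e code_in[OF assms] by (auto simp: fm_def)
qed

end
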